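(* Let $G$ be a simple graph with $V(G)=V_1\cup V_2$, $V_1\cap V_2=\{v_0\}$, and $E(G)=E(G[V_1])\cup E(G[V_2])$. If $f_i\in\mathrm{SEDF}^0(G[V_i])$ for $i=1,2$, then the function $f=f_1*f_2:E(G)\to\{1,-1\}$, defined by $f(e)=f_i(e)$ for $e\in E(G[V_i])$, belongs to $\mathrm{SEDF}^0(G)$ and $f(G)=f_1(G[V_1])+f_2(G[V_2])$.
   Context: $G[S]$ denotes the subgraph induced by $S$. For a graph $H$ and $f:E(H)\to\{1,-1\}$, $f(H)=\sum_{e\in E(H)}f(e)$ and $f(v)=\sum_{e\in E_H(v)}f(e)$, where $E_H(v)$ is the set of edges of $H$ incident with $v$. $\mathrm{SEDF}^0(H)$ is the set of functions $f:E(H)\to\{1,-1\}$ such that (a) $f(v)\ge 0$ for all $v\in V(H)$, and (b) $f(u)+f(v)\ge 2$ for every edge $uv$ with $f(uv)=1$. *)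

theory Defs
  imports Main
begin

definition simple_graph :: "'a set \<Rightarrow> 'a set set \<Rightarrow> bool" where
  "simple_graph V E \<longleftrightarrow> finite V \<and>
     (\<forall>e\<in>E. \<exists>u v. u \<noteq> v \<and> u \<in> V \<and> v \<in> V \<and> e = {u, v})"

definition induced_edges :: "'a set set \<Rightarrow> 'a set \<Rightarrow> 'a set set" where
  "induced_edges E S = {e \<in> E. e \<subseteq> S}"

definition vweight :: "('a set \<Rightarrow> int) \<Rightarrow> 'a set set \<Rightarrow> 'a \<Rightarrow> int" where
  "vweight f E v = (\<Sum>e\<in>{e \<in> E. v \<in> e}. f e)"

definition gweight :: "('a set \<Rightarrow> int) \<Rightarrow> 'a set set \<Rightarrow> int" where
  "gweight f E = (\<Sum>e\<in>E. f e)"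

definition SEDF0 :: "'a set \<Rightarrow> 'a set set \<Rightarrow> ('a set \<Rightarrow> int) set" where
  "SEDF0 V E = {f. (\<forall>e\<in>E. f e = 1 \<or> f e = -1)
       \<and> (\<forall>v\<in>V. vweight f E v \<ge> 0)
       \<and> (\<forall>u v. {u, v} \<in> E \<and> f {u, v} = 1 \<longrightarrow> vweight f E u + vweight f E v \<ge> 2)}"

end

theory Submission
  imports Defs
begin

theorem lemma2p2:
  fixes V V1 V2 :: "'a set" and E :: "'a set set" and v0 :: 'a
    and f1 f2 :: "'a set \<Rightarrow> int"
  assumes "simple_graph V E"
    and "V = V1 \<union> V2"
    and "V1 \<inter> V2 = {v0}"
    and "E = induced_edges E V1 \<union> induced_edges E V2"
    and "f1 \<in> SEDF0 V1 (induced_edges E V1)"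
    and "f2 \<in> SEDF0 V2 (induced_edges E V2)"
  shows "(\<lambda>e. if e \<in> induced_edges E V1 then f1 e else f2 e) \<in> SEDF0 V E
    \<and> gweight (\<lambda>e. if e \<in> induced_edges E V1 then f1 e else f2 e) E
        = gweight f1 (induced_edges E V1) + gweight f2 (induced_edges E V2)"
proof -
  define E1 where "E1 = induced_edges E V1"
  define E2 where "E2 = induced_edges E V2"
  define g where "g = (\<lambda>e. if e \<in> E1 then f1 e else f2 e)"
  have EU: "E = E1 \<union> E2" using assms(4) E1_def E2_def by simp
  have E1s: "\<And>e. e \<in> E1 \<Longrightarrow> e \<subseteq> V1" and E2s: "\<And>e. e \<in> E2 \<Longrightarrow> e \<subseteq> V2"
    by (auto simp: E1_def E2_def induced_edges_def)
  have two: "\<And>e. e \<in> E \<Longrightarrow> \<exists>u v. u \<noteq> v \<and> e = {u,v}"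
    using assms(1) unfolding simple_graph_def by blast
  have disj: "E1 \<inter> E2 = {}"
  proof (rule ccontr)
    assume "E1 \<inter> E2 \<noteq> {}"
    then obtain e where e: "e \<in> E1" "e \<in> E2" by blast
    then have "e \<subseteq> {v0}" using E1s E2s assms(3) by blast
    moreover obtain u v where "u \<noteq> v" "e = {u,v}" using two e EU by blast
    ultimately show False by auto
  qed
  have finV: "finite V" using assms(1) unfolding simple_graph_def by blast
  have "E \<subseteq> Pow V"
  proof
    fix e assume "e \<in> E"
    then obtain u v where "u \<in> V" "v \<in> V" "e = {u,v}"
      using assms(1) unfolding simple_graph_def by meson
    then show "e \<in> Pow V" by simp
  qed
  hence finE: "finite E" using finV by (meson finite_Pow_iff finite_subset)
  have fin1: "finite E1" and fin2: "finite E2" using finE EU by auto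
  have f1p: "f1 \<in> SEDF0 V1 E1" and f2p: "f2 \<in> SEDF0 V2 E2"
    using assms(5,6) E1_def E2_def by auto
  have vw: "vweight g E u = vweight f1 E1 u + vweight f2 E2 u" for u
  proof -
    have "{e \<in> E. u \<in> e} = {e \<in> E1. u \<in> e} \<union> {e \<in> E2. u \<in> e}" using EU by auto
    hence "vweight g E u = sum g {e \<in> E1. u \<in> e} + sum g {e \<in> E2. u \<in> e}"
      unfolding vweight_def using fin1 fin2 disj by (simp add: sum.union_disjoint disjoint_iff)
    also have "sum g {e \<in> E1. u \<in> e} = vweight f1 E1 u"
      unfolding vweight_def g_def by (rule sum.cong) auto
    also have "sum g {e \<in> E2. u \<in> e} = vweight f2 E2 u"
      unfolding vweight_def g_def using disj by (intro sum.cong) auto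
    finally show ?thesis .
  qed
  have nn1: "vweight f1 E1 u \<ge> 0" for u
  proof (cases "u \<in> V1")
    case True then show ?thesis using f1p unfolding SEDF0_def by blast
  next
    case False
    hence "{e \<in> E1. u \<in> e} = {}" using E1s by blast
    then show ?thesis unfolding vweight_def by (simp only:) simp
  qed
  have nn2: "vweight f2 E2 u \<ge> 0" for u
  proof (cases "u \<in> V2")
    case True then show ?thesis using f2p unfolding SEDF0_def by blast
  next
    case False
    hence "{e \<in> E2. u \<in> e} = {}" using E2s by blast
    then show ?thesis unfolding vweight_def by (simp only:) simp
  qed
  have "g \<in> SEDF0 V E"
    unfolding SEDF0_def
  proof (intro CollectI conjI ballI allI impI)
    fix e assume "e \<in> E"
    then show "g e = 1 \<or> g e = -1" using f1p f2p EU unfolding g_def SEDF0_def by auto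
  next
    fix v assume "v \<in> V" then show "vweight g E v \<ge> 0" using vw nn1 nn2 by (simp add: add_nonneg_nonneg)
  next
    fix u v assume h: "{u, v} \<in> E \<and> g {u, v} = 1"
    show "vweight g E u + vweight g E v \<ge> 2"
    proof (cases "{u,v} \<in> E1")
      case True
      hence "f1 {u,v} = 1" using h g_def by simp
      hence "vweight f1 E1 u + vweight f1 E1 v \<ge> 2" using f1p True unfolding SEDF0_def by blast
      then show ?thesis using vw nn2[of u] nn2[of v] by simp
    next
      case False
      hence "{u,v} \<in> E2" "f2 {u,v} = 1" using h g_def EU by auto
      hence "vweight f2 E2 u + vweight f2 E2 v \<ge> 2" using f2p unfolding SEDF0_def by blast
      then show ?thesis using vw nn1[of u] nn1[of v] by simp
    qed
  qed
  moreover have "gweight g E = gweight f1 E1 + gweight f2 E2"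
  proof -
    have "gweight g E = sum g E1 + sum g E2"
      unfolding gweight_def EU using fin1 fin2 disj by (simp add: sum.union_disjoint)
    also have "sum g E1 = gweight f1 E1" unfolding gweight_def g_def by simp
    also have "sum g E2 = gweight f2 E2" unfolding gweight_def g_def using disj
      by (intro sum.cong) auto
    finally show ?thesis .
  qed
  ultimately show ?thesis unfolding g_def E1_def E2_def by simp
qed

end
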